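(* A multiplicative function $m:\mathbb{R}_+\to\mathbb{R}_+$ is Jensen convex (i.e. $m\big(\frac{x+y}{2}\big)\le\frac{m(x)+m(y)}{2}$ for all $x,y>0$) if and only if there exists an additive function $a:\mathbb{R}\to\mathbb{R}$ such that \[ m(t)\ge 1+a(t-1)\qquad(t\in\mathbb{R}_+). \]
   Context: $\mathbb{R}_+=]0,\infty[$. $m:\mathbb{R}_+\to\mathbb{R}_+$ is multiplicative if $m(xy)=m(x)m(y)$ for all $x,y>0$; $a:\mathbb{R}\to\mathbb{R}$ is additive if $a(x+y)=a(x)+a(y)$ for all $x,y\in\mathbb{R}$. *)

theory Defs
  imports Complex_Main
begin

definition multiplicative_pos :: "(real \<Rightarrow> real) \<Rightarrow> bool" where
  "multiplicative_pos m \<longleftrightarrow> (\<forall>x>0. m x > 0) \<and> (\<forall>x>0. \<forall>y>0. m (x * y) = m x * m y)"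

definition additive :: "(real \<Rightarrow> real) \<Rightarrow> bool" where
  "additive a \<longleftrightarrow> (\<forall>x y. a (x + y) = a x + a y)"

definition jensen_convex_pos :: "(real \<Rightarrow> real) \<Rightarrow> bool" where
  "jensen_convex_pos m \<longleftrightarrow> (\<forall>x>0. \<forall>y>0. m ((x + y) / 2) \<le> (m x + m y) / 2)"

end

theory Submission imports Defs begin

definition SA :: "(real \<Rightarrow> real) \<Rightarrow> bool" where
  "SA q \<longleftrightarrow> (\<forall>x y. q (x + y) \<le> q x + q y) \<and> (\<forall>x. q (2 * x) = 2 * q x)"

lemma gen_inf:
  fixes V :: "real \<Rightarrow> nat \<Rightarrow> bool" and E :: "real \<Rightarrow> nat \<Rightarrow> real"
  assumes mono: "\<And>s k k'. V s k \<Longrightarrow> k \<le> k' \<Longrightarrow> V s k' \<and> E s k' \<le> E s k"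
    and ex: "\<And>s. \<exists>k. V s k"
    and add: "\<And>x y k. V x k \<Longrightarrow> V y k \<Longrightarrow> V (x+y) (Suc k) \<and> E (x+y) (Suc k) \<le> E x k + E y k"
    and dbl: "\<And>s k. V s k \<Longrightarrow> V (2*s) (Suc k) \<and> E (2*s) (Suc k) = 2 * E s k"
    and half: "\<And>s k. V (2*s) k \<Longrightarrow> V s k"
    and bdd: "\<And>s. \<exists>B. \<forall>k. V s k \<longrightarrow> B \<le> E s k"
  defines "P \<equiv> \<lambda>s. Inf (E s ` {k. V s k})"
  shows "SA P" and "\<And>s k. V s k \<Longrightarrow> P s \<le> E s k"
proof -
  have ne: "E s ` {k. V s k} \<noteq> {}" for s using ex[of s] by auto
  have bb: "bdd_below (E s ` {k. V s k})" for s
    using bdd[of s] unfolding bdd_below_def by auto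
  show low: "P s \<le> E s k" if "V s k" for s k
    unfolding P_def using that by (intro cInf_lower[OF _ bb]) auto
  have sub: "P (x+y) \<le> P x + P y" for x y
  proof -
    have 1: "P (x+y) - E y l \<le> P x" if "V y l" for l
    proof -
      have "P (x+y) - E y l \<le> E x j" if "V x j" for j
      proof -
        define k where "k = max j l"
        have "V x k" "E x k \<le> E x j" using mono[OF \<open>V x j\<close>, of k] by (auto simp: k_def)
        moreover have "V y k" "E y k \<le> E y l" using mono[OF \<open>V y l\<close>, of k] by (auto simp: k_def)
        ultimately have "V (x+y) (Suc k)" "E (x+y) (Suc k) \<le> E x k + E y k" using add by auto
        then have "P (x+y) \<le> E x k + E y k" using low by fastforce
        then show ?thesis using \<open>E x k \<le> E x j\<close> \<open>E y k \<le> E y l\<close> by linarith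
      qed
      then show ?thesis unfolding P_def by (intro cInf_greatest[OF ne]) auto
    qed
    have "P (x+y) - P x \<le> E y l" if "V y l" for l using 1[OF that] by linarith
    then have "P (x+y) - P x \<le> P y" unfolding P_def by (intro cInf_greatest[OF ne]) auto
    then show ?thesis by linarith
  qed
  have hom: "P (2*s) = 2 * P s" for s
  proof (rule antisym)
    have "P (2*s) / 2 \<le> E s k" if "V s k" for k
      using dbl[OF that] low[of "2*s" "Suc k"] by auto
    then have "P (2*s) / 2 \<le> P s" unfolding P_def by (intro cInf_greatest[OF ne]) auto
    then show "P (2*s) \<le> 2 * P s" by linarith
    have "2 * P s \<le> E (2*s) k" if "V (2*s) k" for k
    proof -
      have "V s k" using half[OF that] .
      then have "2 * P s \<le> 2 * E s k" using low by auto
      also have "\<dots> = E (2*s) (Suc k)" using dbl[OF \<open>V s k\<close>] by auto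
      also have "\<dots> \<le> E (2*s) k" using mono[OF that, of "Suc k"] by auto
      finally show ?thesis .
    qed
    then show "2 * P s \<le> P (2*s)" unfolding P_def by (intro cInf_greatest[OF ne]) auto
  qed
  show "SA P" unfolding SA_def using sub hom by auto
qed


lemma SA_0: "SA q \<Longrightarrow> q 0 = 0"
  unfolding SA_def by (metis mult_zero_right mult_2 add_cancel_right_left)

lemma SA_pow: "SA q \<Longrightarrow> q (2^k * x) = 2^k * q x"
  by (induction k) (auto simp: SA_def mult.assoc)

lemma SA_neg: "SA q \<Longrightarrow> - q (- x) \<le> q x"
  using SA_0[of q] unfolding SA_def by (metis add.right_inverse add.commute le_diff_eq diff_minus_eq_add minus_diff_eq diff_le_eq add_le_cancel_left)

lemma minimal_additive:
  assumes "SA M" and minl: "\<And>q. SA q \<Longrightarrow> (\<forall>x. q x \<le> M x) \<Longrightarrow> q = M"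
  shows "additive M"
proof -
  have M2: "M (x+y) \<le> M x + M y" for x y using assms(1) by (auto simp: SA_def)
  have negz: "M (-z) \<le> - M z" for z
  proof -
    define E where "E = (\<lambda>x (k::nat). M (x + 2^k * z) - 2^k * M z)"
    define V where "V = (\<lambda>(x::real) (k::nat). True)"
    have step: "E x (Suc k) \<le> E x k" for x k
    proof -
      have "M (x + 2^(Suc k) * z) \<le> M (x + 2^k*z) + M (2^k * z)"
        using M2[of "x + 2^k*z" "2^k*z"] by (simp add: algebra_simps)
      then show ?thesis using SA_pow[OF assms(1), of k z] by (simp add: E_def algebra_simps)
    qed
    have mono: "V s k \<Longrightarrow> k \<le> k' \<Longrightarrow> V s k' \<and> E s k' \<le> E s k" for s k k'
    proof -
      assume "k \<le> k'"
      have "E s (k + d) \<le> E s k" for d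
        by (induction d) (auto intro: order_trans[OF step])
      then show ?thesis using \<open>k \<le> k'\<close> by (metis V_def le_add_diff_inverse)
    qed
    have add: "V x k \<Longrightarrow> V y k \<Longrightarrow> V (x+y) (Suc k) \<and> E (x+y) (Suc k) \<le> E x k + E y k" for x y k
      using M2[of "x + 2^k*z" "y + 2^k*z"] by (simp add: E_def V_def algebra_simps)
    have dbl: "V s k \<Longrightarrow> V (2*s) (Suc k) \<and> E (2*s) (Suc k) = 2 * E s k" for s k
      using assms(1) unfolding SA_def E_def V_def
      by (metis (no_types) distrib_left mult.assoc power_Suc right_diff_distrib)
    have bdd: "\<exists>B. \<forall>k. V s k \<longrightarrow> B \<le> E s k" for s
    proof -
      have "- M (-s) \<le> E s k" for k
        using M2[of "s + 2^k*z" "-s"] SA_pow[OF assms(1), of k z] by (simp add: E_def algebra_simps)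
      then show ?thesis by blast
    qed
    define Q where "Q = (\<lambda>s. Inf (E s ` {k. V s k}))"
    have "SA Q" and low: "\<And>s k. V s k \<Longrightarrow> Q s \<le> E s k"
      using gen_inf[of V E, OF mono _ add dbl _ bdd] unfolding Q_def by (auto simp: V_def)
    have "Q x \<le> M x" for x using low[of x 0] M2[of x z] by (auto simp: V_def E_def)
    then have "Q = M" using minl[OF \<open>SA Q\<close>] by auto
    then show ?thesis using low[of "-z" 0] SA_0[OF assms(1)] by (auto simp: V_def E_def)
  qed
  have "M (-z) = - M z" for z using negz[of z] SA_neg[OF assms(1), of z] by linarith
  then have "M (x+y) = M x + M y" for x y
    using M2[of x y] M2[of "x+y" "-y"] by (metis add.commute add_le_cancel_left antisym le_diff_eq add_diff_cancel diff_conv_add_uminus diff_add_cancel)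
  then show ?thesis by (auto simp: additive_def)
qed


lemma hb:
  assumes "SA p"
  shows "\<exists>a. additive a \<and> (\<forall>x. a x \<le> p x)"
proof -
  define S where "S = {q. SA q \<and> (\<forall>x. q x \<le> p x)}"
  define R where "R = (\<lambda>q1 q2::real\<Rightarrow>real. \<forall>x. q2 x \<le> q1 x)"
  have po: "partial_order_on S (relation_of R S)"
    unfolding partial_order_on_def preorder_on_def refl_on_def trans_def antisym_def relation_of_def R_def
    by (auto intro: order_trans) (meson ext order.antisym)
  have lowb: "- p (- x) \<le> q x" if "q \<in> S" for q x
  proof -
    have "SA q" "q (-x) \<le> p (-x)" using that by (auto simp: S_def)
    then show ?thesis using SA_neg[of q x] by linarith
  qed
  have ch: "\<exists>u\<in>S. \<forall>a\<in>C. R a u" if C: "C \<in> Chains (relation_of R S)" for C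
  proof (cases "C = {}")
    case True
    then show ?thesis using assms by (auto simp: S_def)
  next
    case False
    have CS: "C \<subseteq> S" using C unfolding Chains_def relation_of_def by auto
    have cmp: "R a b \<or> R b a" if "a \<in> C" "b \<in> C" for a b
      using C that unfolding Chains_def relation_of_def by auto
    define U where "U = (\<lambda>x. Inf ((\<lambda>q. q x) ` C))"
    have ne: "(\<lambda>q. q x) ` C \<noteq> {}" for x using False by auto
    have bb: "bdd_below ((\<lambda>q. q x) ` C)" for x
      unfolding bdd_below_def using lowb CS by blast
    have le: "U x \<le> q x" if "q \<in> C" for q x
      unfolding U_def using that by (intro cInf_lower[OF _ bb]) auto
    have sub: "U (x+y) \<le> U x + U y" for x y
    proof -
      have 1: "U (x+y) - b y \<le> U x" if "b \<in> C" for b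
      proof -
        have "U (x+y) - b y \<le> a x" if "a \<in> C" for a
        proof (cases "R a b")
          case True
          have "U (x+y) \<le> b (x+y)" using le \<open>b\<in>C\<close> .
          also have "\<dots> \<le> b x + b y" using CS \<open>b\<in>C\<close> by (auto simp: S_def SA_def)
          finally show ?thesis using True by (auto simp: R_def) (smt (verit))
        next
          case False
          then have "R b a" using cmp \<open>a\<in>C\<close> \<open>b\<in>C\<close> by blast
          have "U (x+y) \<le> a (x+y)" using le \<open>a\<in>C\<close> .
          also have "\<dots> \<le> a x + a y" using CS \<open>a\<in>C\<close> by (auto simp: S_def SA_def)
          finally show ?thesis using \<open>R b a\<close> by (auto simp: R_def) (smt (verit))
        qed
        then show ?thesis unfolding U_def by (intro cInf_greatest[OF ne]) auto
      qed
      have "U (x+y) - U x \<le> b y" if "b \<in> C" for b using 1[OF that] by linarith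
      then have "U (x+y) - U x \<le> U y" unfolding U_def by (intro cInf_greatest[OF ne]) auto
      then show ?thesis by linarith
    qed
    have hom: "U (2*x) = 2 * U x" for x
    proof (rule antisym)
      have "U (2*x) / 2 \<le> q x" if "q \<in> C" for q
        using le[OF that, of "2*x"] CS that by (auto simp: S_def SA_def)
      then have "U (2*x) / 2 \<le> U x" unfolding U_def by (intro cInf_greatest[OF ne]) auto
      then show "U (2*x) \<le> 2 * U x" by linarith
      have "2 * U x \<le> q (2*x)" if "q \<in> C" for q
        using le[OF that, of x] CS that by (auto simp: S_def SA_def)
      then show "2 * U x \<le> U (2*x)" unfolding U_def[THEN fun_cong, of "2*x"] by (intro cInf_greatest[OF ne]) auto
    qed
    obtain q0 where "q0 \<in> C" using False by auto
    have "q0 x \<le> p x" for x using CS \<open>q0\<in>C\<close> by (auto simp: S_def)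
    then have "U x \<le> p x" for x using le[OF \<open>q0\<in>C\<close>, of x] by (meson order_trans)
    then have "U \<in> S" unfolding S_def SA_def using sub hom by auto
    then show ?thesis using le by (auto simp: R_def)
  qed
  obtain M where "M \<in> S" and maxm: "\<forall>a\<in>S. R M a \<longrightarrow> a = M"
    using predicate_Zorn[OF po ch] by blast
  have "additive M"
  proof (rule minimal_additive)
    show "SA M" using \<open>M \<in> S\<close> by (auto simp: S_def)
    show "q = M" if "SA q" "\<forall>x. q x \<le> M x" for q
      using maxm that \<open>M \<in> S\<close> by (auto simp: S_def R_def intro: order_trans)
  qed
  then show ?thesis using \<open>M \<in> S\<close> by (auto simp: S_def)
qed


theorem theorem5:
  fixes m :: "real \<Rightarrow> real"
  assumes "multiplicative_pos m"
  shows "jensen_convex_pos m \<longleftrightarrow>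
           (\<exists>a. additive a \<and> (\<forall>t>0. m t \<ge> 1 + a (t - 1)))"
proof
  have mpos: "\<And>x. x > 0 \<Longrightarrow> m x > 0" and mmul: "\<And>x y. x > 0 \<Longrightarrow> y > 0 \<Longrightarrow> m (x*y) = m x * m y"
    using assms by (auto simp: multiplicative_pos_def)
  {
    assume J: "jensen_convex_pos m"
    have m1: "m 1 = 1" using mmul[of 1 1] mpos[of 1] by simp
    define f where "f = (\<lambda>s. m (1 + s) - 1)"
    have f0: "f 0 = 0" using m1 by (simp add: f_def)
    have fJ: "f ((u+v)/2) \<le> (f u + f v)/2" if "u > -1" "v > -1" for u v
    proof -
      have "m (((1+u) + (1+v))/2) \<le> (m (1+u) + m (1+v))/2"
      proof -
        have "1 + u > 0" "1 + v > 0" using that by auto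
        then show ?thesis using J unfolding jensen_convex_pos_def by blast
      qed
      moreover have "((1+u) + (1+v))/2 = 1 + (u+v)/2" by simp
      ultimately have "m (1 + (u+v)/2) \<le> (m (1+u) + m (1+v))/2" by metis
      then show ?thesis by (simp add: f_def)
    qed
    have fhalf: "2 * f (u/2) \<le> f u" if "u > -1" for u
      using fJ[OF that, of 0] f0 by simp
    have L0: "2^d * f (u/2^d) \<le> f u" if "u > -1" for u d
    proof (induction d)
      case 0 then show ?case by simp
    next
      case (Suc d)
      have "u / 2^d > -1"
      proof -
        have "(1::real) \<le> 2^d" by simp
        then show ?thesis using that
          by (smt (verit, ccfv_SIG) divide_less_eq_1_pos le_divide_eq_1_pos divide_minus_left minus_divide_left less_divide_eq_1_pos zero_less_power)
      qed
      then have "2 * f (u/2^d/2) \<le> f (u/2^d)" by (rule fhalf)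
      then have "2^Suc d * f (u / 2^Suc d) \<le> 2^d * f (u/2^d)"
        by (simp add: mult.assoc[symmetric] mult.commute[of _ 2] divide_divide_eq_left)
      then show ?case using Suc by linarith
    qed
    define E where "E = (\<lambda>s (k::nat). 2^k * f (s / 2^k))"
    define V where "V = (\<lambda>(s::real) (k::nat). \<bar>s\<bar> < 2^k)"
    have Vd: "V s k \<Longrightarrow> s / 2^k > -1 \<and> -s/2^k > -1" for s k
      by (auto simp: V_def field_simps)
    have mono: "V s k \<Longrightarrow> k \<le> k' \<Longrightarrow> V s k' \<and> E s k' \<le> E s k" for s k k'
    proof -
      assume "V s k" "k \<le> k'"
      then obtain d where k': "k' = k + d" by (metis le_add_diff_inverse)
      have "(2::real)^k \<le> 2^k'" using \<open>k \<le> k'\<close> by simp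
      then have "V s k'" using \<open>V s k\<close> unfolding V_def by linarith
      have "E s k' = 2^k * (2^d * f ((s/2^k)/2^d))"
        by (simp add: E_def k' power_add divide_divide_eq_left mult.commute)
      also have "\<dots> \<le> 2^k * f (s/2^k)"
        using L0[of "s/2^k" d] Vd[OF \<open>V s k\<close>] by simp
      finally show ?thesis using \<open>V s k'\<close> by (simp add: E_def)
    qed
    have ex: "\<exists>k. V s k" for s
      using real_arch_pow[of 2 "\<bar>s\<bar>"] by (auto simp: V_def)
    have add: "V x k \<Longrightarrow> V y k \<Longrightarrow> V (x+y) (Suc k) \<and> E (x+y) (Suc k) \<le> E x k + E y k" for x y k
    proof -
      assume a: "V x k" "V y k"
      then have "V (x+y) (Suc k)" by (auto simp: V_def)
      have "f ((x/2^k + y/2^k)/2) \<le> (f (x/2^k) + f (y/2^k))/2"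
        using fJ Vd a by blast
      moreover have "(x/2^k + y/2^k)/2 = (x+y)/2^Suc k" by (simp add: field_simps)
      ultimately have "f ((x+y)/2^Suc k) \<le> (f (x/2^k) + f (y/2^k))/2" by simp
      then have "2 * f ((x+y)/2^Suc k) \<le> f (x/2^k) + f (y/2^k)" by simp
      then have "2^k * (2 * f ((x+y)/2^Suc k)) \<le> 2^k * (f (x/2^k) + f (y/2^k))"
        by (rule mult_left_mono) simp
      then show ?thesis using \<open>V (x+y) (Suc k)\<close> by (simp add: E_def algebra_simps)
    qed
    have dbl: "V s k \<Longrightarrow> V (2*s) (Suc k) \<and> E (2*s) (Suc k) = 2 * E s k" for s k
      by (auto simp: V_def E_def)
    have half: "V (2*s) k \<Longrightarrow> V s k" for s k by (auto simp: V_def)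
    have pm: "E s k + E (-s) k \<ge> 0" if "V s k" for s k
    proof -
      have "f ((s/2^k + -s/2^k)/2) \<le> (f (s/2^k) + f (-s/2^k))/2"
        using Vd[OF that] by (intro fJ) auto
      then have "0 \<le> f (s/2^k) + f (-s/2^k)" using f0 by simp
      then have "0 \<le> 2^k * (f (s/2^k) + f (-s/2^k))" by simp
      then show ?thesis by (simp add: E_def algebra_simps)
    qed
    have bdd: "\<exists>B. \<forall>k. V s k \<longrightarrow> B \<le> E s k" for s
    proof -
      obtain k0 where k0: "V s k0" using ex by blast
      have "- E (-s) k0 \<le> E s k" if "V s k" for k
      proof -
        define j where "j = max k k0"
        have "V s j" "E s j \<le> E s k" using mono[OF that, of j] by (auto simp: j_def)
        moreover have "V (-s) k0" using k0 by (auto simp: V_def)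
        then have "E (-s) j \<le> E (-s) k0" using mono[of "-s" k0 j] by (auto simp: j_def)
        ultimately show ?thesis using pm[of s j] by linarith
      qed
      then show ?thesis by blast
    qed
    define P where "P = (\<lambda>s. Inf (E s ` {k. V s k}))"
    have "SA P" and low: "\<And>s k. V s k \<Longrightarrow> P s \<le> E s k"
      using gen_inf[of V E, OF mono ex add dbl half bdd] unfolding P_def by auto
    obtain a where a: "additive a" "\<And>x. a x \<le> P x" using hb[OF \<open>SA P\<close>] by blast
    have "1 + a (t - 1) \<le> m t" if "t > 0" for t
    proof -
      obtain k where "V (t-1) k" using ex by blast
      have "a (t-1) \<le> E (t-1) k" using a(2) low[OF \<open>V (t-1) k\<close>] by (meson order_trans)
      also have "\<dots> \<le> f (t-1)" using L0[of "t-1" k] that by (simp add: E_def)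
      finally show ?thesis by (simp add: f_def)
    qed
    then show "\<exists>a. additive a \<and> (\<forall>t>0. m t \<ge> 1 + a (t - 1))" using a(1) by blast
  }
  {
    assume "\<exists>a. additive a \<and> (\<forall>t>0. m t \<ge> 1 + a (t - 1))"
    then obtain a where ad: "additive a" and ge: "\<And>t. t > 0 \<Longrightarrow> m t \<ge> 1 + a (t - 1)" by blast
    have a0: "a 0 = 0" using ad unfolding additive_def by (metis add_cancel_left_left add_0)
    show "jensen_convex_pos m" unfolding jensen_convex_pos_def
    proof (intro allI impI)
      fix x y :: real assume "x > 0" "y > 0"
      define u where "u = (x+y)/2"
      have u: "u > 0" using \<open>x>0\<close> \<open>y>0\<close> by (simp add: u_def)
      have mx: "m x = m u * m (x/u)" using mmul[of u "x/u"] u \<open>x>0\<close> by simp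
      have my: "m y = m u * m (y/u)" using mmul[of u "y/u"] u \<open>y>0\<close> by simp
      have "m (x/u) + m (y/u) \<ge> 2 + (a (x/u - 1) + a (y/u - 1))"
        using ge[of "x/u"] ge[of "y/u"] u \<open>x>0\<close> \<open>y>0\<close> by simp
      moreover have "a (x/u - 1) + a (y/u - 1) = a (x/u - 1 + (y/u - 1))"
        using ad unfolding additive_def by metis
      moreover have "x/u - 1 + (y/u - 1) = 0" using u by (simp add: u_def field_simps)
      ultimately have "m (x/u) + m (y/u) \<ge> 2" using a0 by simp
      then have "m u * 2 \<le> m u * (m (x/u) + m (y/u))" using mpos[OF u] by simp
      then show "m ((x + y) / 2) \<le> (m x + m y) / 2"
        using mx my by (simp add: u_def[symmetric] algebra_simps)
    qed
  }
qed

end
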